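(* Let $n\ge1$, $G(x)=e^{-\pi|x|^2}$, and $\mathcal{M}_G(\mu)(x)=\sup_{r>0}G_r*\mu(x)$ where $G_r(x)=r^{-n}G(x/r)$. Then for every finite positive measure $V$ on $\mathbb{R}^n$ absolutely continuous with respect to Lebesgue measure and every fixed $\rho>0$, $$\lim_{t\to0^+}\Big\|\mathcal{M}_G(V_t)(x)-\Big(\frac{n}{2\pi e}\Big)^{\frac n2}\frac{V(\mathbb{R}^n)}{|x|^n}\Big\|_{L^{1,\infty}(\mathbb{R}^n\setminus B(0,\rho),\,dx)}=0.$$
   Context: $G_r*\mu(x)=\int_{\mathbb{R}^n}G_r(x-y)\,d\mu(y)$. $V_t(E)=V(E/t)$ with $E/t=\{x/t:x\in E\}$. For a measurable set $E$, $\|f\|_{L^{1,\infty}(E)}=\sup_{\lambda>0}\lambda|\{x\in E:|f(x)|>\lambda\}|$. *)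

theory Defs
  imports "HOL-Analysis.Analysis"
begin

definition gauss_kernel :: "real \<Rightarrow> 'a::euclidean_space \<Rightarrow> real" where
  "gauss_kernel r z = r powr (- real DIM('a)) * exp (- pi * (norm z / r)\<^sup>2)"

definition gauss_max :: "'a::euclidean_space measure \<Rightarrow> 'a \<Rightarrow> ennreal" where
  "gauss_max \<mu> x = (SUP r\<in>{0<..}. \<integral>\<^sup>+ y. ennreal (gauss_kernel r (x - y)) \<partial>\<mu>)"

text \<open>Dilated measure V_t(E) = V(E/t), i.e. the push-forward of V under y \<mapsto> t y.\<close>
definition dilate_measure :: "real \<Rightarrow> 'a::euclidean_space measure \<Rightarrow> 'a measure" where
  "dilate_measure t V = distr V borel (\<lambda>y. t *\<^sub>R y)"

definition weak_L1_norm :: "'a::euclidean_space set \<Rightarrow> ('a \<Rightarrow> ereal) \<Rightarrow> ennreal" where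
  "weak_L1_norm E f = (SUP s\<in>{0<..}. ennreal s * emeasure lebesgue {x\<in>E. ereal s < \<bar>f x\<bar>})"

end

theory Submission
  imports Defs
begin

lemma kernel_upper:
  fixes z :: "'a::euclidean_space"
  assumes r: "r > 0" and z: "z \<noteq> 0"
  shows "gauss_kernel r z \<le> (real DIM('a) / (2 * pi * exp 1)) powr (real DIM('a) / 2) / norm z ^ DIM('a)"
proof -
  define n where "n = real DIM('a)"
  define a where "a = norm z"
  have n: "n > 0" unfolding n_def by simp
  have a: "a > 0" using z unfolding a_def by simp
  define w where "w = 2 * pi * a\<^sup>2 / (n * r\<^sup>2)"
  have w: "w > 0" unfolding w_def using n a r by simp
  have lnw: "ln w = ln 2 + ln pi + 2 * ln a - ln n - 2 * ln r"
    unfolding w_def using n a r by (simp add: ln_mult ln_div ln_realpow)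
  have "ln w \<le> w - 1" using ln_le_minus_one w by blast
  hence key: "(n/2) * ln w \<le> (n/2) * (w - 1)" using n by (simp add: mult_left_mono)
  have nw: "(n/2) * w = pi * a\<^sup>2 / r\<^sup>2" unfolding w_def using n r by (simp add: field_simps)
  have lhs: "ln (gauss_kernel r z) = - n * ln r - pi * a\<^sup>2 / r\<^sup>2"
    unfolding gauss_kernel_def n_def[symmetric] a_def[symmetric] using r
    by (simp add: ln_mult ln_powr power_divide)
  have rhs: "ln ((n / (2 * pi * exp 1)) powr (n / 2) / a ^ DIM('a)) =
      (n/2) * (ln n - ln 2 - ln pi - 1) - n * ln a"
    using n a by (simp add: ln_div ln_mult ln_powr ln_realpow n_def)
  have "ln (gauss_kernel r z) \<le> ln ((n / (2 * pi * exp 1)) powr (n / 2) / a ^ DIM('a))"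
    unfolding lhs rhs using key nw lnw by (simp add: algebra_simps)
  moreover have "gauss_kernel r z > 0" unfolding gauss_kernel_def using r by simp
  moreover have "(n / (2 * pi * exp 1)) powr (n / 2) / a ^ DIM('a) > 0" using n a by simp
  ultimately show ?thesis unfolding n_def a_def by simp
qed

lemma kernel_opt:
  fixes x z :: "'a::euclidean_space"
  assumes x: "x \<noteq> 0"
  shows "gauss_kernel (norm x * sqrt (2 * pi / real DIM('a))) z =
     ((real DIM('a) / (2 * pi * exp 1)) powr (real DIM('a) / 2) / norm x ^ DIM('a)) *
     exp (real DIM('a) / 2 - real DIM('a) * (norm z)\<^sup>2 / (2 * (norm x)\<^sup>2))"
proof -
  define n where "n = real DIM('a)"
  define a where "a = norm x"
  have n: "n > 0" unfolding n_def by simp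
  have a: "a > 0" using x unfolding a_def by simp
  define rs where "rs = a * sqrt (2 * pi / n)"
  have rs: "rs > 0" unfolding rs_def using n a by simp
  have rs2: "rs\<^sup>2 = a\<^sup>2 * (2 * pi / n)" unfolding rs_def using n by (simp add: power_mult_distrib)
  have lnrs: "ln rs = ln a + (ln 2 + ln pi - ln n) / 2"
    unfolding rs_def using n a by (simp add: ln_mult ln_div ln_sqrt)
  have q: "pi * (norm z)\<^sup>2 / rs\<^sup>2 = n * (norm z)\<^sup>2 / (2 * a\<^sup>2)"
    unfolding rs2 using n a by (simp add: field_simps)
  have lhs: "ln (gauss_kernel rs z) = - n * ln rs - pi * (norm z)\<^sup>2 / rs\<^sup>2"
    unfolding gauss_kernel_def n_def[symmetric] using rs
    by (simp add: ln_mult ln_powr power_divide)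
  have rhs: "ln (((n / (2 * pi * exp 1)) powr (n / 2) / a ^ DIM('a)) *
     exp (n / 2 - n * (norm z)\<^sup>2 / (2 * a\<^sup>2))) =
      (n/2) * (ln n - ln 2 - ln pi - 1) - n * ln a + (n / 2 - n * (norm z)\<^sup>2 / (2 * a\<^sup>2))"
    using n a by (simp add: ln_div ln_mult ln_powr ln_realpow n_def)
  have "ln (gauss_kernel rs z) = ln (((n / (2 * pi * exp 1)) powr (n / 2) / a ^ DIM('a)) *
     exp (n / 2 - n * (norm z)\<^sup>2 / (2 * a\<^sup>2)))"
    unfolding lhs rhs q lnrs by (simp add: field_simps)
  moreover have "gauss_kernel rs z > 0" unfolding gauss_kernel_def using rs by simp
  moreover have "((n / (2 * pi * exp 1)) powr (n / 2) / a ^ DIM('a)) *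
     exp (n / 2 - n * (norm z)\<^sup>2 / (2 * a\<^sup>2)) > 0" using n a by simp
  ultimately show ?thesis unfolding n_def a_def rs_def by simp
qed

lemma kernel_lower:
  fixes x z :: "'a::euclidean_space"
  assumes rho: "\<rho> > 0" "norm x \<ge> \<rho>" and d: "d \<ge> 0" and zx: "norm z \<le> norm x + d"
  shows "gauss_kernel (norm x * sqrt (2 * pi / real DIM('a))) z \<ge>
     ((real DIM('a) / (2 * pi * exp 1)) powr (real DIM('a) / 2) / norm x ^ DIM('a)) *
     exp (- real DIM('a) * (d / \<rho> + d\<^sup>2 / (2 * \<rho>\<^sup>2)))"
proof -
  define n where "n = real DIM('a)"
  define a where "a = norm x"
  have n: "n > 0" unfolding n_def by simp
  have a: "a \<ge> \<rho>" "a > 0" using rho unfolding a_def by auto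
  have x: "x \<noteq> 0" using a a_def by auto
  have z2: "(norm z)\<^sup>2 \<le> (a + d)\<^sup>2" using zx d a_def by (simp add: power_mono)
  have "n * (norm z)\<^sup>2 / (2 * a\<^sup>2) \<le> n * (a + d)\<^sup>2 / (2 * a\<^sup>2)"
    using z2 n a by (simp add: divide_right_mono)
  also have "\<dots> = n / 2 + n * (d / a + d\<^sup>2 / (2 * a\<^sup>2))"
    using a by (simp add: field_simps power2_eq_square)
  also have "\<dots> \<le> n / 2 + n * (d / \<rho> + d\<^sup>2 / (2 * \<rho>\<^sup>2))"
  proof -
    have "d / a \<le> d / \<rho>" using a d rho by (simp add: divide_left_mono)
    moreover have "d\<^sup>2 / (2 * a\<^sup>2) \<le> d\<^sup>2 / (2 * \<rho>\<^sup>2)"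
      using a d rho by (intro divide_left_mono) (auto simp: power_mono)
    ultimately show ?thesis using n by (simp add: mult_left_mono)
  qed
  finally have e: "- n * (d / \<rho> + d\<^sup>2 / (2 * \<rho>\<^sup>2)) \<le> n / 2 - n * (norm z)\<^sup>2 / (2 * a\<^sup>2)"
    by simp
  have c: "(n / (2 * pi * exp 1)) powr (n / 2) / a ^ DIM('a) \<ge> 0" using n a by simp
  have G: "gauss_kernel (a * sqrt (2 * pi / n)) z = ((n / (2 * pi * exp 1)) powr (n / 2) / a ^ DIM('a)) *
     exp (n / 2 - n * (norm z)\<^sup>2 / (2 * a\<^sup>2))"
    using kernel_opt[OF x, of z] unfolding n_def a_def by simp
  have "((n / (2 * pi * exp 1)) powr (n / 2) / a ^ DIM('a)) * exp (- n * (d / \<rho> + d\<^sup>2 / (2 * \<rho>\<^sup>2)))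
     \<le> gauss_kernel (a * sqrt (2 * pi / n)) z"
    unfolding G by (rule mult_left_mono[OF exp_mono[OF e] c])
  thus ?thesis unfolding n_def a_def by simp
qed

lemma kernel_upper2:
  fixes x z :: "'a::euclidean_space"
  assumes r: "r > 0" and rho: "\<rho> > 0" "norm x \<ge> \<rho>" and d: "d \<ge> 0" "d < \<rho>"
    and zx: "norm z \<ge> norm x - d"
  shows "gauss_kernel r z \<le>
     ((real DIM('a) / (2 * pi * exp 1)) powr (real DIM('a) / 2) / norm x ^ DIM('a)) * (\<rho> / (\<rho> - d)) ^ DIM('a)"
proof -
  define c where "c = (real DIM('a) / (2 * pi * exp 1)) powr (real DIM('a) / 2)"
  have c: "c > 0" unfolding c_def by simp
  have xd: "norm x - d > 0" using rho d by simp
  have z: "z \<noteq> 0" using zx xd by auto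
  have "gauss_kernel r z \<le> c / norm z ^ DIM('a)" using kernel_upper[OF r z] c_def by simp
  also have "\<dots> \<le> c / (norm x - d) ^ DIM('a)"
    using c xd zx z by (intro divide_left_mono power_mono mult_pos_pos) auto
  also have "\<dots> = (c / norm x ^ DIM('a)) * (norm x / (norm x - d)) ^ DIM('a)"
    using xd rho by (auto simp: power_divide)
  also have "\<dots> \<le> (c / norm x ^ DIM('a)) * (\<rho> / (\<rho> - d)) ^ DIM('a)"
  proof (intro mult_left_mono power_mono)
    show "norm x / (norm x - d) \<le> \<rho> / (\<rho> - d)"
      using xd rho d mult_right_mono[of \<rho> "norm x" d] by (simp add: divide_simps mult.commute right_diff_distrib)
  qed (use c xd in auto)
  finally show ?thesis unfolding c_def .
qed

lemma pred_ball_borel[measurable]: "Measurable.pred borel (\<lambda>y. y \<in> ball (x::'a::euclidean_space) e)"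
  using pred_sets2[of "ball x e" borel "\<lambda>y. y" borel] by simp

definition gA :: "nat \<Rightarrow> real" where
  "gA N = (\<Sum>k. exp (- pi * (real k)\<^sup>2) * (real k + 1) ^ N)"

lemma gA_summable: "summable (\<lambda>k. exp (- pi * (real k)\<^sup>2) * (real k + 1) ^ N)"
proof (rule summable_comparison_test'[where N="N+1"])
  have "norm (exp (-1::real)) < 1" by simp
  from summable_geometric[OF this] show "summable (\<lambda>k. exp (-1::real) ^ k)" by simp
  fix k :: nat assume k: "k \<ge> N + 1"
  have "(real k + 1) ^ N \<le> exp (real k) ^ N"
  proof (intro power_mono)
    show "real k + 1 \<le> exp (real k)" using exp_ge_add_one_self[of "real k"] by linarith
  qed simp
  also have "\<dots> = exp (real N * real k)" by (simp add: exp_of_nat_mult[symmetric])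
  finally have a: "exp (- pi * (real k)\<^sup>2) * (real k + 1) ^ N \<le> exp (- pi * (real k)\<^sup>2) * exp (real N * real k)"
    by (simp add: mult_left_mono)
  have "pi * (real k)\<^sup>2 \<ge> (real N + 1) * real k"
  proof -
    have "(real N + 1) * real k \<le> real k * real k" using k by (intro mult_right_mono) auto
    also have "\<dots> \<le> pi * (real k)\<^sup>2" using pi_gt3 mult_right_mono[of 1 pi "real k * real k"] by (simp add: power2_eq_square)
    finally show ?thesis .
  qed
  hence "- pi * (real k)\<^sup>2 + real N * real k \<le> - real k" by (simp add: algebra_simps)
  hence "exp (- pi * (real k)\<^sup>2) * exp (real N * real k) \<le> exp (-1) ^ k"
    by (simp add: exp_add[symmetric] exp_of_nat_mult[symmetric])
  from order_trans[OF a this] show "norm (exp (- pi * (real k)\<^sup>2) * (real k + 1) ^ N) \<le> exp (-1) ^ k" by simp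
qed

lemma gA_nonneg: "gA N \<ge> 0"
  unfolding gA_def by (rule suminf_nonneg[OF gA_summable]) simp

lemma kernel_decomp:
  fixes x y :: "'a::euclidean_space"
  assumes r: "r > 0"
  shows "ennreal (gauss_kernel r (x - y)) \<le>
    (\<Sum>k. ennreal (r powr (- real DIM('a)) * exp (- pi * (real k)\<^sup>2)) * indicator (ball x ((real k + 1) * r)) y)"
proof -
  define k0 where "k0 = nat \<lfloor>dist x y / r\<rfloor>"
  have u: "dist x y / r \<ge> 0" using r by simp
  have k0a: "real k0 \<le> dist x y / r" unfolding k0_def using u by linarith
  have k0b: "dist x y / r < real k0 + 1" unfolding k0_def using u by linarith
  have inb: "y \<in> ball x ((real k0 + 1) * r)" using k0b r by (simp add: divide_simps)
  have "(real k0)\<^sup>2 \<le> (norm (x - y) / r)\<^sup>2" using k0a by (simp add: power_mono dist_norm)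
  hence "gauss_kernel r (x - y) \<le> r powr (- real DIM('a)) * exp (- pi * (real k0)\<^sup>2)"
    unfolding gauss_kernel_def by (intro mult_left_mono) auto
  hence "ennreal (gauss_kernel r (x - y)) \<le>
      ennreal (r powr (- real DIM('a)) * exp (- pi * (real k0)\<^sup>2)) * indicator (ball x ((real k0 + 1) * r)) y"
    using inb by (simp add: ennreal_leI)
  also have "\<dots> \<le> (\<Sum>k. ennreal (r powr (- real DIM('a)) * exp (- pi * (real k)\<^sup>2)) * indicator (ball x ((real k + 1) * r)) y)"
    using sum_le_suminf[OF summableI, of "{k0}"] by simp
  finally show ?thesis .
qed

lemma domination:
  fixes \<mu> :: "'a::euclidean_space measure"
  assumes sets: "sets \<mu> = sets borel" and r: "r > 0" and lam: "L \<ge> 0"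
    and bd: "\<And>\<rho>. \<rho> > 0 \<Longrightarrow> emeasure \<mu> (ball x \<rho>) \<le> ennreal (L * \<rho> ^ DIM('a))"
  shows "(\<integral>\<^sup>+ y. ennreal (gauss_kernel r (x - y)) \<partial>\<mu>) \<le> ennreal (L * gA DIM('a))"
proof -
  define n where "n = DIM('a)"
  define a where "a k = ennreal (r powr (- real n) * exp (- pi * (real k)\<^sup>2))" for k :: nat
  have "(\<integral>\<^sup>+ y. ennreal (gauss_kernel r (x - y)) \<partial>\<mu>) \<le>
      (\<integral>\<^sup>+ y. (\<Sum>k. a k * indicator (ball x ((real k + 1) * r)) y) \<partial>\<mu>)"
    using kernel_decomp[OF r] unfolding a_def n_def by (intro nn_integral_mono) auto
  also have "\<dots> = (\<Sum>k. \<integral>\<^sup>+ y. a k * indicator (ball x ((real k + 1) * r)) y \<partial>\<mu>)"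
    by (rule nn_integral_suminf) (subst measurable_cong_sets[OF sets refl], measurable)
  also have "\<dots> = (\<Sum>k. a k * emeasure \<mu> (ball x ((real k + 1) * r)))"
    by (intro suminf_cong nn_integral_cmult_indicator) (simp add: sets)
  also have "\<dots> \<le> (\<Sum>k. a k * ennreal (L * ((real k + 1) * r) ^ n))"
    by (intro suminf_le summableI mult_left_mono bd[unfolded n_def[symmetric]]) (use r in auto)
  also have "\<dots> = (\<Sum>k. ennreal (L * (exp (- pi * (real k)\<^sup>2) * (real k + 1) ^ n)))"
  proof (intro suminf_cong)
    fix k
    have one: "r powr (- real n) * r ^ n = 1" using r by (simp add: powr_minus powr_realpow divide_simps)
    have "a k * ennreal (L * ((real k + 1) * r) ^ n) = ennreal ((r powr (- real n) * r ^ n) * (L * (exp (- pi * (real k)\<^sup>2) * (real k + 1) ^ n)))"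
      unfolding a_def using r lam by (simp add: ennreal_mult'[symmetric] power_mult_distrib mult_ac)
    thus "a k * ennreal (L * ((real k + 1) * r) ^ n) = ennreal (L * (exp (- pi * (real k)\<^sup>2) * (real k + 1) ^ n))"
      unfolding one by simp
  qed
  also have "\<dots> = ennreal (\<Sum>k. L * (exp (- pi * (real k)\<^sup>2) * (real k + 1) ^ n))"
    by (rule suminf_ennreal_eq) (use lam gA_summable[of n] in \<open>auto intro: summable_sums summable_mult\<close>)
  also have "\<dots> = ennreal (L * gA DIM('a))"
    unfolding gA_def n_def using gA_summable by (simp add: suminf_mult)
  finally show ?thesis .
qed

lemma finite_cover_bound:
  fixes \<mu> :: "'a::euclidean_space measure"
  assumes sets: "sets \<mu> = sets borel" and L: "L > 0"
    and F: "finite F"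
    and rr: "\<And>i. i \<in> F \<Longrightarrow> rr i > 0 \<and> ennreal (L * rr i ^ DIM('a)) < emeasure \<mu> (ball i (rr i))"
    and disj: "pairwise (\<lambda>i j. disjnt (ball i (rr i)) (ball j (rr j))) F"
  shows "emeasure lborel (\<Union>i\<in>F. ball i (5 * rr i)) \<le>
      ennreal (5 ^ DIM('a) * unit_ball_vol (real DIM('a)) / L) * emeasure \<mu> UNIV"
proof -
  define n where "n = DIM('a)"
  define K where "K = 5 ^ n * unit_ball_vol (real n) / L"
  have K: "K \<ge> 0" unfolding K_def using L by simp
  have "emeasure lborel (\<Union>i\<in>F. ball i (5 * rr i)) \<le> (\<Sum>i\<in>F. emeasure lborel (ball i (5 * rr i)))"
    by (rule emeasure_subadditive_finite[OF F]) auto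
  also have "\<dots> \<le> (\<Sum>i\<in>F. ennreal K * emeasure \<mu> (ball i (rr i)))"
  proof (intro sum_mono)
    fix i assume i: "i \<in> F"
    have ri: "rr i > 0" using rr[OF i] by simp
    have "emeasure lborel (ball i (5 * rr i)) = ennreal (unit_ball_vol (real n) * (5 * rr i) ^ n)"
      using emeasure_ball[of "5 * rr i" i] ri unfolding n_def by simp
    also have "\<dots> = ennreal K * ennreal (L * rr i ^ n)"
      unfolding K_def using L ri by (simp add: ennreal_mult'[symmetric] power_mult_distrib field_simps)
    also have "\<dots> \<le> ennreal K * emeasure \<mu> (ball i (rr i))"
      using rr[OF i] unfolding n_def by (intro mult_left_mono) auto
    finally show "emeasure lborel (ball i (5 * rr i)) \<le> ennreal K * emeasure \<mu> (ball i (rr i))" .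
  qed
  also have "\<dots> = ennreal K * (\<Sum>i\<in>F. emeasure \<mu> (ball i (rr i)))"
    by (simp add: sum_distrib_left)
  also have "\<dots> = ennreal K * emeasure \<mu> (\<Union>i\<in>F. ball i (rr i))"
  proof -
    have "(\<Sum>i\<in>F. emeasure \<mu> (ball i (rr i))) = emeasure \<mu> (\<Union>i\<in>F. ball i (rr i))"
    proof (rule sum_emeasure)
      show "(\<lambda>i. ball i (rr i)) ` F \<subseteq> sets \<mu>" by (simp add: sets image_subset_iff)
      show "disjoint_family_on (\<lambda>i. ball i (rr i)) F"
        using disj unfolding disjoint_family_on_def pairwise_def disjnt_def by auto
    qed (rule F)
    thus ?thesis by simp
  qed
  also have "\<dots> \<le> ennreal K * emeasure \<mu> UNIV"
    by (intro mult_left_mono emeasure_mono) (auto simp: sets)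
  finally show ?thesis unfolding K_def n_def .
qed

lemma covering:
  fixes \<mu> :: "'a::euclidean_space measure"
  assumes sets: "sets \<mu> = sets borel" and fin: "emeasure \<mu> UNIV < \<infinity>" and L: "L > 0"
  obtains W where "W \<in> sets borel"
    "{x. \<exists>\<rho>>0. ennreal (L * \<rho> ^ DIM('a)) < emeasure \<mu> (ball x \<rho>)} \<subseteq> W"
    "emeasure lborel W \<le> ennreal (5 ^ DIM('a) * unit_ball_vol (real DIM('a)) / L) * emeasure \<mu> UNIV"
proof -
  define n where "n = DIM('a)"
  define U where "U = {x. \<exists>\<rho>>0. ennreal (L * \<rho> ^ n) < emeasure \<mu> (ball x \<rho>)}"
  define Mr where "Mr = enn2real (emeasure \<mu> UNIV)"
  have MU: "emeasure \<mu> UNIV = ennreal Mr" unfolding Mr_def using fin by (simp add: ennreal_enn2real_if)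
  define rr where "rr x = (SOME \<rho>. \<rho> > 0 \<and> ennreal (L * \<rho> ^ n) < emeasure \<mu> (ball x \<rho>))" for x
  have rr: "rr x > 0 \<and> ennreal (L * rr x ^ n) < emeasure \<mu> (ball x (rr x))" if "x \<in> U" for x
  proof -
    have "\<exists>\<rho>. \<rho> > 0 \<and> ennreal (L * \<rho> ^ n) < emeasure \<mu> (ball x \<rho>)" using that unfolding U_def by auto
    from someI_ex[OF this] show ?thesis unfolding rr_def .
  qed
  define B where "B = max 1 (Mr / L)"
  have rrB: "0 < rr x \<and> rr x \<le> B" if "x \<in> U" for x
  proof -
    have "emeasure \<mu> (ball x (rr x)) \<le> emeasure \<mu> UNIV" by (rule emeasure_mono) (simp_all add: sets)
    from less_le_trans[OF conjunct2[OF rr[OF that]] this]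
    have "ennreal (L * rr x ^ n) < emeasure \<mu> UNIV" .
    hence lt: "L * rr x ^ n < Mr" unfolding MU using rr[OF that] L
      by (simp add: ennreal_less_iff)
    show ?thesis
    proof (cases "rr x \<le> 1")
      case False
      hence "rr x \<le> rr x ^ n" unfolding n_def by (intro self_le_power) auto
      hence "L * rr x \<le> L * rr x ^ n" using L by simp
      hence "L * rr x \<le> Mr" using lt by linarith
      hence "rr x \<le> Mr / L" using L by (simp add: field_simps)
      thus ?thesis using rr[OF that] unfolding B_def by simp
    qed (use rr[OF that] in \<open>auto simp: B_def\<close>)
  qed
  have cov: "U \<subseteq> (\<Union>i\<in>U. ball i (rr i))" using rrB by force
  obtain C where C: "countable C" "C \<subseteq> U"
     "pairwise (\<lambda>i j. disjnt (ball i (rr i)) (ball j (rr j))) C"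
     "U \<subseteq> (\<Union>i\<in>C. ball i (5 * rr i))"
    using Vitali_covering_lemma_balls[where S=U and K=U and a="\<lambda>i. i" and r=rr and B=B, OF cov rrB] by blast
  define W where "W = (\<Union>i\<in>C. ball i (5 * rr i))"
  have Wb: "W \<in> sets borel" unfolding W_def by (intro borel_open) auto
  define K where "K = ennreal (5 ^ n * unit_ball_vol (real n) / L) * emeasure \<mu> UNIV"
  have fcb: "emeasure lborel (\<Union>i\<in>F. ball i (5 * rr i)) \<le> K" if "finite F" "F \<subseteq> C" for F
    unfolding K_def n_def
  proof (rule finite_cover_bound[OF sets L that(1)])
    show "\<And>i. i \<in> F \<Longrightarrow> rr i > 0 \<and> ennreal (L * rr i ^ DIM('a)) < emeasure \<mu> (ball i (rr i))"
      using rr C(2) that(2) unfolding n_def by auto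
    show "pairwise (\<lambda>i j. disjnt (ball i (rr i)) (ball j (rr j))) F"
      using C(3) that(2) by (rule pairwise_subset)
  qed
  have WK: "emeasure lborel W \<le> K"
  proof (cases "C = {}")
    case True thus ?thesis unfolding W_def by simp
  next
    case False
    define e where "e = from_nat_into C"
    define A where "A N = (\<Union>i\<in>e ` {..<N}. ball i (5 * rr i))" for N
    have WA: "W = (\<Union>N. A N)"
    proof -
      have "W = (\<Union>k. ball (e k) (5 * rr (e k)))"
        unfolding W_def e_def using UN_from_nat_into[OF C(1) False, of "\<lambda>i. ball i (5 * rr i)"] by simp
      also have "\<dots> = (\<Union>N. A N)"
      proof (intro equalityI subsetI)
        fix y assume "y \<in> (\<Union>k. ball (e k) (5 * rr (e k)))"
        then obtain k where "y \<in> ball (e k) (5 * rr (e k))" by blast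
        thus "y \<in> (\<Union>N. A N)" unfolding A_def by (intro UN_I[of "Suc k"]) auto
      next
        fix y assume "y \<in> (\<Union>N. A N)" thus "y \<in> (\<Union>k. ball (e k) (5 * rr (e k)))" unfolding A_def by auto
      qed
      finally show ?thesis .
    qed
    have "emeasure lborel W = (SUP N. emeasure lborel (A N))"
      unfolding WA
    proof (rule SUP_emeasure_incseq[symmetric])
      show "range A \<subseteq> sets lborel" unfolding A_def by auto
      show "incseq A" unfolding A_def incseq_def by (auto 4 3 intro: less_le_trans)
    qed
    also have "\<dots> \<le> K"
    proof (rule SUP_least)
      fix N
      have "e ` {..<N} \<subseteq> C" unfolding e_def using from_nat_into[OF False] by auto
      thus "emeasure lborel (A N) \<le> K" unfolding A_def by (intro fcb) auto
    qed
    finally show ?thesis .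
  qed
  show ?thesis
  proof (rule that[OF Wb])
    show "{x. \<exists>\<rho>>0. ennreal (L * \<rho> ^ DIM('a)) < emeasure \<mu> (ball x \<rho>)} \<subseteq> W"
      using C(4) unfolding W_def U_def n_def by auto
    show "emeasure lborel W \<le> ennreal (5 ^ DIM('a) * unit_ball_vol (real DIM('a)) / L) * emeasure \<mu> UNIV"
      using WK unfolding K_def n_def .
  qed
qed

definition CW :: "nat \<Rightarrow> real" where
  "CW N = 5 ^ N * unit_ball_vol (real N) * (gA N + 1)"

lemma CW_pos: "CW N > 0"
  unfolding CW_def using gA_nonneg[of N] by (intro mult_pos_pos) auto

lemma weak_type:
  fixes \<mu> :: "'a::euclidean_space measure"
  assumes sets: "sets \<mu> = sets borel" and fin: "emeasure \<mu> UNIV < \<infinity>" and s: "s > 0"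
  obtains W where "W \<in> sets borel"
    "{x. \<exists>r>0. ennreal s < (\<integral>\<^sup>+ y. ennreal (gauss_kernel r (x - y)) \<partial>\<mu>)} \<subseteq> W"
    "emeasure lborel W \<le> ennreal (CW DIM('a) / s) * emeasure \<mu> UNIV"
proof -
  define n where "n = DIM('a)"
  define L where "L = s / (gA n + 1)"
  have g: "gA n \<ge> 0" by (rule gA_nonneg)
  have L: "L > 0" unfolding L_def using s g by simp
  obtain W where W: "W \<in> sets borel"
    "{x. \<exists>\<rho>>0. ennreal (L * \<rho> ^ DIM('a)) < emeasure \<mu> (ball x \<rho>)} \<subseteq> W"
    "emeasure lborel W \<le> ennreal (5 ^ DIM('a) * unit_ball_vol (real DIM('a)) / L) * emeasure \<mu> UNIV"
    by (rule covering[OF sets fin L])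
  show ?thesis
  proof (rule that[OF W(1)])
    show "{x. \<exists>r>0. ennreal s < (\<integral>\<^sup>+ y. ennreal (gauss_kernel r (x - y)) \<partial>\<mu>)} \<subseteq> W"
    proof
      fix x assume "x \<in> {x. \<exists>r>0. ennreal s < (\<integral>\<^sup>+ y. ennreal (gauss_kernel r (x - y)) \<partial>\<mu>)}"
      then obtain r where r: "r > 0" and big: "ennreal s < (\<integral>\<^sup>+ y. ennreal (gauss_kernel r (x - y)) \<partial>\<mu>)"
        by auto
      have "\<exists>\<rho>>0. ennreal (L * \<rho> ^ DIM('a)) < emeasure \<mu> (ball x \<rho>)"
      proof (rule ccontr)
        assume "\<not> ?thesis"
        hence bd: "\<And>\<rho>. \<rho> > 0 \<Longrightarrow> emeasure \<mu> (ball x \<rho>) \<le> ennreal (L * \<rho> ^ DIM('a))"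
          by (meson not_less)
        have "(\<integral>\<^sup>+ y. ennreal (gauss_kernel r (x - y)) \<partial>\<mu>) \<le> ennreal (L * gA DIM('a))"
          by (rule domination[OF sets r _ bd]) (use L in auto)
        also have "L * gA DIM('a) \<le> s"
          unfolding L_def n_def[symmetric] using s g by (simp add: field_simps)
        hence "ennreal (L * gA DIM('a)) \<le> ennreal s" by (rule ennreal_leI)
        finally show False using big by simp
      qed
      thus "x \<in> W" using W(2) by auto
    qed
    have "5 ^ DIM('a) * unit_ball_vol (real DIM('a)) / L = CW DIM('a) / s"
      unfolding L_def CW_def n_def using s g by (simp add: field_simps)
    thus "emeasure lborel W \<le> ennreal (CW DIM('a) / s) * emeasure \<mu> UNIV" using W(3) by simp
  qed
qed

lemma gk_cont: "continuous_on UNIV (gauss_kernel r :: 'a::euclidean_space \<Rightarrow> real)"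
proof (cases "r = 0")
  case True thus ?thesis unfolding gauss_kernel_def by simp
next
  case False thus ?thesis unfolding gauss_kernel_def by (intro continuous_intros) auto
qed
lemma gk_borel: "(gauss_kernel r :: 'a::euclidean_space \<Rightarrow> real) \<in> borel_measurable borel"
  by (rule borel_measurable_continuous_onI[OF gk_cont])
lemma gk_meas[measurable]:
  "f \<in> borel_measurable M \<Longrightarrow> (\<lambda>y. gauss_kernel r (f y)) \<in> borel_measurable M"
  by (rule measurable_compose[OF _ gk_borel])
lemma int_dilate:
  fixes V :: "'a::euclidean_space measure"
  assumes sets: "sets V = sets borel"
  shows "(\<integral>\<^sup>+ z. ennreal (gauss_kernel r (x - z)) \<partial>dilate_measure t V) =
         (\<integral>\<^sup>+ y. ennreal (gauss_kernel r (x - t *\<^sub>R y)) \<partial>V)"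
  unfolding dilate_measure_def
proof (rule nn_integral_distr)
  show "(\<lambda>y. t *\<^sub>R y) \<in> measurable V borel"
    by (simp only: measurable_cong_sets[OF sets refl]) measurable
  show "(\<lambda>z. ennreal (gauss_kernel r (x - z))) \<in> borel_measurable (distr V borel ((*\<^sub>R) t))"
    by (simp only: measurable_cong_sets[OF sets_distr refl]) measurable
qed

lemma int_tail:
  fixes V :: "'a::euclidean_space measure"
  assumes sets: "sets V = sets borel" and A: "A \<in> sets borel"
  shows "(\<integral>\<^sup>+ z. ennreal (gauss_kernel r (x - z)) \<partial>distr (density V (indicator A)) borel (\<lambda>y. t *\<^sub>R y)) =
         (\<integral>\<^sup>+ y. indicator A y * ennreal (gauss_kernel r (x - t *\<^sub>R y)) \<partial>V)"
proof -
  have "(\<integral>\<^sup>+ z. ennreal (gauss_kernel r (x - z)) \<partial>distr (density V (indicator A)) borel (\<lambda>y. t *\<^sub>R y)) =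
     (\<integral>\<^sup>+ y. ennreal (gauss_kernel r (x - t *\<^sub>R y)) \<partial>density V (indicator A))"
  proof (rule nn_integral_distr)
    show "(\<lambda>y. t *\<^sub>R y) \<in> measurable (density V (indicator A)) borel"
      by (simp only: measurable_cong_sets[OF sets_density refl] measurable_cong_sets[OF sets refl]) measurable
    show "(\<lambda>z. ennreal (gauss_kernel r (x - z))) \<in> borel_measurable (distr (density V (indicator A)) borel ((*\<^sub>R) t))"
      by (simp only: measurable_cong_sets[OF sets_distr refl]) measurable
  qed
  also have "\<dots> = (\<integral>\<^sup>+ y. indicator A y * ennreal (gauss_kernel r (x - t *\<^sub>R y)) \<partial>V)"
  proof (rule nn_integral_density)
    show "indicator A \<in> borel_measurable V"
      by (simp only: measurable_cong_sets[OF sets refl]) (rule borel_measurable_indicator[OF A])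
    show "(\<lambda>y. ennreal (gauss_kernel r (x - t *\<^sub>R y))) \<in> borel_measurable V"
      by (simp only: measurable_cong_sets[OF sets refl]) measurable
  qed
  finally show ?thesis .
qed

lemma tail_sets: "sets (distr (density V (indicator A)) borel (\<lambda>y. t *\<^sub>R y)) = sets (borel :: 'a::euclidean_space measure)"
  by simp

lemma tail_total:
  fixes V :: "'a::euclidean_space measure"
  assumes sets: "sets V = sets borel" and A: "A \<in> sets borel"
  shows "emeasure (distr (density V (indicator A)) borel (\<lambda>y. t *\<^sub>R y)) UNIV = emeasure V A"
proof -
  have sp: "space V = UNIV" using sets_eq_imp_space_eq[OF sets] by simp
  have "emeasure (distr (density V (indicator A)) borel (\<lambda>y. t *\<^sub>R y)) UNIV =
      emeasure (density V (indicator A)) UNIV"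
  proof (subst emeasure_distr)
    show "(\<lambda>y. t *\<^sub>R y) \<in> measurable (density V (indicator A)) borel"
      by (simp only: measurable_cong_sets[OF sets_density refl] measurable_cong_sets[OF sets refl]) measurable
  qed (simp_all add: sp)
  also have "\<dots> = (\<integral>\<^sup>+ y. indicator A y * indicator UNIV y \<partial>V)"
  proof (rule emeasure_density)
    show "indicator A \<in> borel_measurable V"
      by (simp only: measurable_cong_sets[OF sets refl]) (rule borel_measurable_indicator[OF A])
  qed (use sp sets.top[of V] in simp)
  also have "\<dots> = (\<integral>\<^sup>+ y. indicator A y \<partial>V)" by simp
  also have "\<dots> = emeasure V A"
    by (rule nn_integral_indicator) (use A sets in \<open>simp only: sets\<close>)
  finally show ?thesis .
qed

lemma leb_borel:
  fixes S :: "'a::euclidean_space set"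
  assumes "S \<in> sets borel"
  shows "emeasure lebesgue S = emeasure lborel S"
  using assms by simp

lemma ind_gk_meas:
  fixes V :: "'a::euclidean_space measure"
  assumes sets: "sets V = sets borel" and A: "A \<in> sets borel"
  shows "(\<lambda>y. indicator A y * ennreal (gauss_kernel r (x - t *\<^sub>R y))) \<in> borel_measurable V"
proof -
  note A[measurable]
  show ?thesis by (simp only: measurable_cong_sets[OF sets refl]) measurable
qed

lemma main_bound:
  fixes V :: "'a::euclidean_space measure"
  assumes sets: "sets V = sets borel" and fm: "finite_measure V" and rho: "\<rho> > 0" and s: "s > 0"
    and R: "R > 0" and eta: "\<eta> > 0" and e1: "0 < \<epsilon>1" "\<epsilon>1 \<le> 1"
    and tailV: "emeasure V (- cball 0 R) \<le> ennreal \<eta>"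
    and t: "t > 0" "t * R < \<rho>"
    and up: "(\<rho> / (\<rho> - t * R)) ^ DIM('a) \<le> 1 + \<epsilon>1"
    and lo: "1 - \<epsilon>1 \<le> exp (- real DIM('a) * (t * R / \<rho> + (t * R)\<^sup>2 / (2 * \<rho>\<^sup>2)))"
  shows "ennreal s * emeasure lebesgue {x \<in> - ball 0 \<rho>. ereal s < \<bar>enn2ereal (gauss_max (dilate_measure t V) x)
            - ereal ((real DIM('a) / (2 * pi * exp 1)) powr (real DIM('a) / 2) * measure V (space V) / norm x ^ DIM('a))\<bar>}
     \<le> ennreal (2 * unit_ball_vol (real DIM('a)) * ((real DIM('a) / (2 * pi * exp 1)) powr (real DIM('a) / 2) * (measure V (space V) * \<epsilon>1 + \<eta>))
         + 2 * CW DIM('a) * \<eta>)"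
proof -
  interpret V: finite_measure V by (rule fm)
  define n where "n = DIM('a)"
  have n: "n > 0" unfolding n_def by simp
  define c where "c = (real n / (2 * pi * exp 1)) powr (real n / 2)"
  have c: "c > 0" unfolding c_def using n by simp
  define m where "m = measure V (space V)"
  have sp: "space V = UNIV" using sets_eq_imp_space_eq[OF sets] by simp
  have m: "m \<ge> 0" unfolding m_def by simp
  define B where "B = cball (0::'a) R"
  have BV: "B \<in> sets V" unfolding B_def by (simp only: sets) simp
  have cBV: "- B \<in> sets V" unfolding B_def by (simp only: sets) simp
  have cBb: "- B \<in> sets borel" unfolding B_def by simp
  have mcB: "measure V (- B) \<le> \<eta>"
    using tailV eta unfolding B_def by (simp add: V.emeasure_eq_measure ennreal_le_iff)
  have mB: "measure V B \<ge> m - \<eta>"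
  proof -
    have "measure V (space V - B) = m - measure V B" unfolding m_def by (rule V.finite_measure_compl[OF BV])
    moreover have "space V - B = - B" using sp by auto
    ultimately show ?thesis using mcB by simp
  qed
  have mBm: "measure V B \<le> m" unfolding m_def by (rule V.bounded_measure)
  have mB0: "measure V B \<ge> 0" by simp
  define d where "d = t * R"
  have d: "d \<ge> 0" "d < \<rho>" unfolding d_def using t R by auto
  define K where "K = c * (m * \<epsilon>1 + \<eta>)"
  have K: "K > 0" unfolding K_def using c m e1 eta by (simp add: add_nonneg_pos)
  define \<rho>1 where "\<rho>1 = root n (2 * K / s)"
  have r1: "\<rho>1 \<ge> 0" unfolding \<rho>1_def using K s by (intro real_root_ge_zero) simp
  have r1n: "\<rho>1 ^ n = 2 * K / s" unfolding \<rho>1_def using K s n by simp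
  define \<omega> where "\<omega> = unit_ball_vol (real n)"
  have om: "\<omega> \<ge> 0" unfolding \<omega>_def by simp
  define \<mu> where "\<mu> = distr (density V (indicator (- B))) borel (\<lambda>y. t *\<^sub>R y)"
  have \<mu>s: "sets \<mu> = sets borel" unfolding \<mu>_def by (rule tail_sets)
  have \<mu>U: "emeasure \<mu> UNIV = emeasure V (- B)" unfolding \<mu>_def by (rule tail_total[OF sets cBb])
  have \<mu>U2: "emeasure \<mu> UNIV \<le> ennreal \<eta>" using tailV unfolding \<mu>U B_def .
  have \<mu>fin: "emeasure \<mu> UNIV < \<infinity>" using \<mu>U2 by (simp add: le_less_trans)
  have s2: "s / 2 > 0" using s by simp
  obtain W where W: "W \<in> sets borel"
    "{x. \<exists>r>0. ennreal (s / 2) < (\<integral>\<^sup>+ y. ennreal (gauss_kernel r (x - y)) \<partial>\<mu>)} \<subseteq> W"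
    "emeasure lborel W \<le> ennreal (CW DIM('a) / (s / 2)) * emeasure \<mu> UNIV"
    by (rule weak_type[OF \<mu>s \<mu>fin s2])
  define S where "S = {x \<in> - ball 0 \<rho>. ereal s < \<bar>enn2ereal (gauss_max (dilate_measure t V) x)
            - ereal ((real DIM('a) / (2 * pi * exp 1)) powr (real DIM('a) / 2) * measure V (space V) / norm x ^ DIM('a))\<bar>}"
  have sub: "S \<subseteq> ball (0::'a) \<rho>1 \<union> W"
  proof
    fix x assume xS: "x \<in> S"
    show "x \<in> ball (0::'a) \<rho>1 \<union> W"
    proof (rule ccontr)
      assume "x \<notin> ball (0::'a) \<rho>1 \<union> W"
      hence xW: "x \<notin> W" and xr1: "norm x \<ge> \<rho>1" by auto
      have xr: "norm x \<ge> \<rho>" using xS unfolding S_def by auto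
      have x0: "norm x > 0" using xr rho by linarith
      have Bb: "B \<in> sets borel" unfolding B_def by simp
      have bt: "(\<integral>\<^sup>+ y. indicator (- B) y * ennreal (gauss_kernel r (x - t *\<^sub>R y)) \<partial>V) \<le> ennreal (s / 2)"
        if r: "r > 0" for r
      proof -
        have "\<not> (ennreal (s / 2) < (\<integral>\<^sup>+ z. ennreal (gauss_kernel r (x - z)) \<partial>\<mu>))"
          using xW W(2) r by blast
        thus ?thesis using int_tail[OF sets cBb, where r=r and x=x and t=t] unfolding \<mu>_def by (simp add: not_less)
      qed
      define a where "a r = (\<integral>\<^sup>+ y. indicator B y * ennreal (gauss_kernel r (x - t *\<^sub>R y)) \<partial>V)" for r
      define b where "b r = (\<integral>\<^sup>+ y. indicator (- B) y * ennreal (gauss_kernel r (x - t *\<^sub>R y)) \<partial>V)" for r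
      have split: "(\<integral>\<^sup>+ y. ennreal (gauss_kernel r (x - t *\<^sub>R y)) \<partial>V) = a r + b r" for r
      proof -
        have "(\<integral>\<^sup>+ y. ennreal (gauss_kernel r (x - t *\<^sub>R y)) \<partial>V) =
           (\<integral>\<^sup>+ y. indicator B y * ennreal (gauss_kernel r (x - t *\<^sub>R y)) +
                   indicator (- B) y * ennreal (gauss_kernel r (x - t *\<^sub>R y)) \<partial>V)"
          by (rule nn_integral_cong) (simp split: split_indicator)
        also have "\<dots> = a r + b r" unfolding a_def b_def
          by (rule nn_integral_add[OF ind_gk_meas[OF sets Bb] ind_gk_meas[OF sets cBb]])
        finally show ?thesis .
      qed
      have gm: "gauss_max (dilate_measure t V) x = (SUP r\<in>{0<..}. a r + b r)"
        unfolding gauss_max_def int_dilate[OF sets] split ..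
      have Bn: "norm (t *\<^sub>R y) \<le> d" if "y \<in> B" for y
        using that t R unfolding B_def d_def by (simp add: mult_left_mono)
      define P where "P = c / norm x ^ n"
      have P: "P > 0" unfolding P_def using c x0 by simp
      define A where "A = (\<rho> / (\<rho> - d)) ^ n"
      have A: "A \<le> 1 + \<epsilon>1" "A \<ge> 0" unfolding A_def d_def n_def using up t rho by auto
      define Q where "Q = P * A"
      have Q: "Q \<ge> 0" unfolding Q_def using P A by simp
      have VB: "emeasure V B = ennreal (measure V B)" by (rule V.emeasure_eq_measure)
      have aup: "a r \<le> ennreal Q * emeasure V B" if r: "r > 0" for r
      proof -
        have "a r \<le> (\<integral>\<^sup>+ y. ennreal Q * indicator B y \<partial>V)" unfolding a_def
        proof (rule nn_integral_mono)
          fix y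
          show "indicator B y * ennreal (gauss_kernel r (x - t *\<^sub>R y)) \<le> ennreal Q * indicator B y"
          proof (cases "y \<in> B")
            case True
            have "norm (x - t *\<^sub>R y) \<ge> norm x - d"
              using Bn[OF True] norm_triangle_ineq2[of x "t *\<^sub>R y"] by linarith
            hence "gauss_kernel r (x - t *\<^sub>R y) \<le> Q"
              using kernel_upper2[OF r rho xr d(1) d(2)] unfolding Q_def P_def A_def c_def n_def by simp
            thus ?thesis using True by (simp add: ennreal_leI)
          qed simp
        qed
        also have "\<dots> = ennreal Q * emeasure V B" by (rule nn_integral_cmult_indicator[OF BV])
        finally show ?thesis .
      qed
      have gup: "gauss_max (dilate_measure t V) x \<le> ennreal (Q * m + s / 2)"
        unfolding gm
      proof (rule SUP_least)
        fix r :: real assume "r \<in> {0<..}"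
        hence r: "r > 0" by simp
        have "a r + b r \<le> ennreal Q * ennreal m + ennreal (s / 2)"
        proof (rule add_mono)
          have "ennreal Q * emeasure V B \<le> ennreal Q * ennreal m"
            unfolding VB by (intro mult_left_mono ennreal_leI mBm) simp
          thus "a r \<le> ennreal Q * ennreal m" using aup[OF r] by (rule order_trans[rotated])
          show "b r \<le> ennreal (s / 2)" unfolding b_def by (rule bt[OF r])
        qed
        also have "\<dots> = ennreal (Q * m + s / 2)" using Q m s by (simp add: ennreal_mult')
        finally show "a r + b r \<le> ennreal (Q * m + s / 2)" .
      qed
      define rs where "rs = norm x * sqrt (2 * pi / real n)"
      have rs: "rs > 0" unfolding rs_def using x0 n by simp
      define E where "E = exp (- real n * (d / \<rho> + d\<^sup>2 / (2 * \<rho>\<^sup>2)))"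
      have E: "E \<ge> 1 - \<epsilon>1" "E \<ge> 0" unfolding E_def d_def n_def using lo by auto
      have alo: "ennreal (P * E) * emeasure V B \<le> a rs"
      proof -
        have "ennreal (P * E) * emeasure V B = (\<integral>\<^sup>+ y. ennreal (P * E) * indicator B y \<partial>V)"
          by (rule nn_integral_cmult_indicator[OF BV, symmetric])
        also have "\<dots> \<le> a rs" unfolding a_def
        proof (rule nn_integral_mono)
          fix y
          show "ennreal (P * E) * indicator B y \<le> indicator B y * ennreal (gauss_kernel rs (x - t *\<^sub>R y))"
          proof (cases "y \<in> B")
            case True
            have "norm (x - t *\<^sub>R y) \<le> norm x + d"
              using Bn[OF True] norm_triangle_ineq4[of x "t *\<^sub>R y"] by linarith
            hence "P * E \<le> gauss_kernel rs (x - t *\<^sub>R y)"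
              using kernel_lower[OF rho xr d(1)] unfolding P_def E_def rs_def c_def n_def by simp
            thus ?thesis using True by (simp add: ennreal_leI)
          qed simp
        qed
        finally show ?thesis .
      qed
      have glo: "ennreal (P * E * measure V B) \<le> gauss_max (dilate_measure t V) x"
      proof -
        have "ennreal (P * E * measure V B) = ennreal (P * E) * emeasure V B"
          unfolding VB using P E by (simp add: ennreal_mult')
        also have "\<dots> \<le> a rs" by (rule alo)
        also have "\<dots> \<le> a rs + b rs" by simp
        also have "\<dots> \<le> gauss_max (dilate_measure t V) x" unfolding gm
          by (rule SUP_upper) (use rs in simp)
        finally show ?thesis .
      qed
      define \<phi> where "\<phi> = enn2real (gauss_max (dilate_measure t V) x)"
      have gfin: "gauss_max (dilate_measure t V) x \<noteq> top" using gup by (auto simp: top_unique)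
      have gphi: "gauss_max (dilate_measure t V) x = ennreal \<phi>" unfolding \<phi>_def using gfin
        by (simp add: ennreal_enn2real_if)
      have phi0: "\<phi> \<ge> 0" unfolding \<phi>_def by simp
      have phi_up: "\<phi> \<le> Q * m + s / 2"
      proof -
        have "ennreal \<phi> \<le> ennreal (Q * m + s / 2)" using gup unfolding gphi .
        moreover have "Q * m + s / 2 \<ge> 0" using Q m s by simp
        ultimately show ?thesis using ennreal_le_iff by blast
      qed
      have phi_lo: "P * E * measure V B \<le> \<phi>" using glo phi0 unfolding gphi by (simp add: ennreal_le_iff)
      define D where "D = P * m"
      have Deq: "(real DIM('a) / (2 * pi * exp 1)) powr (real DIM('a) / 2) * measure V (space V) / norm x ^ DIM('a) = D"
        unfolding D_def P_def c_def m_def n_def by simp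
      have "ereal s < \<bar>enn2ereal (gauss_max (dilate_measure t V) x)
            - ereal ((real DIM('a) / (2 * pi * exp 1)) powr (real DIM('a) / 2) * measure V (space V) / norm x ^ DIM('a))\<bar>"
        using xS unfolding S_def by blast
      hence "ereal s < \<bar>ereal \<phi> - ereal D\<bar>" unfolding Deq gphi using phi0 by simp
      hence big: "s < \<bar>\<phi> - D\<bar>" by simp
      have KP: "P * (m * \<epsilon>1 + \<eta>) \<le> s / 2"
      proof -
        have "norm x ^ n \<ge> \<rho>1 ^ n" by (rule power_mono[OF xr1 r1])
        hence nx: "norm x ^ n \<ge> 2 * K / s" using r1n by simp
        have "P * (m * \<epsilon>1 + \<eta>) = K / norm x ^ n" unfolding P_def K_def by simp
        also have "\<dots> \<le> K / (2 * K / s)" using nx K s x0 by (intro divide_left_mono) auto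
        also have "\<dots> = s / 2" using K s by simp
        finally show ?thesis .
      qed
      have f1: "Q * m \<le> P * m + P * (m * \<epsilon>1)"
      proof -
        have "Q * m = P * (A * m)" unfolding Q_def by simp
        also have "\<dots> \<le> P * ((1 + \<epsilon>1) * m)" using A m P by (intro mult_left_mono mult_right_mono) auto
        finally show ?thesis by (simp add: algebra_simps)
      qed
      have f2: "P * E * measure V B \<ge> P * m - P * (m * \<epsilon>1 + \<eta>)"
      proof -
        have "(1 - \<epsilon>1) * (m - \<eta>) \<le> (1 - \<epsilon>1) * measure V B" using e1 mB by (intro mult_left_mono) auto
        also have "\<dots> \<le> E * measure V B" using E mB0 by (intro mult_right_mono) auto
        finally have "(1 - \<epsilon>1) * (m - \<eta>) \<le> E * measure V B" .
        moreover have "m - (m * \<epsilon>1 + \<eta>) \<le> (1 - \<epsilon>1) * (m - \<eta>)" using e1 eta by (simp add: algebra_simps)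
        ultimately have "m - (m * \<epsilon>1 + \<eta>) \<le> E * measure V B" by linarith
        hence "P * (m - (m * \<epsilon>1 + \<eta>)) \<le> P * (E * measure V B)" using P by (intro mult_left_mono) auto
        thus ?thesis by (simp add: algebra_simps)
      qed
      have f3: "P * (m * \<epsilon>1) \<le> P * (m * \<epsilon>1 + \<eta>)" using P eta by (intro mult_left_mono) auto
      have "\<bar>\<phi> - D\<bar> \<le> s" unfolding D_def using phi_up phi_lo f1 f2 f3 KP by linarith
      thus False using big by simp
    qed
  qed
  have "emeasure lebesgue S \<le> emeasure lebesgue (ball (0::'a) \<rho>1 \<union> W)"
    by (rule emeasure_mono[OF sub]) (use W(1) in simp)
  also have "\<dots> = emeasure lborel (ball (0::'a) \<rho>1 \<union> W)" using W(1) by simp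
  also have "\<dots> \<le> emeasure lborel (ball (0::'a) \<rho>1) + emeasure lborel W"
    using emeasure_subadditive[of "ball (0::'a) \<rho>1" lborel W] W(1) by simp
  also have "\<dots> \<le> ennreal (\<omega> * (2 * K / s)) + ennreal (CW DIM('a) / (s / 2)) * ennreal \<eta>"
  proof (rule add_mono)
    show "emeasure lborel (ball (0::'a) \<rho>1) \<le> ennreal (\<omega> * (2 * K / s))"
      using emeasure_ball[OF r1, of "0::'a"] r1n unfolding \<omega>_def n_def by simp
    show "emeasure lborel W \<le> ennreal (CW DIM('a) / (s / 2)) * ennreal \<eta>"
      by (rule order_trans[OF W(3) mult_left_mono[OF \<mu>U2]]) simp
  qed
  also have "\<dots> = ennreal (\<omega> * (2 * K / s) + CW DIM('a) / (s / 2) * \<eta>)"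
  proof -
    have e: "ennreal (CW DIM('a) / (s / 2)) * ennreal \<eta> = ennreal (CW DIM('a) / (s / 2) * \<eta>)"
      using CW_pos[of "DIM('a)"] s by (subst ennreal_mult') auto
    show ?thesis unfolding e using om K s eta CW_pos[of "DIM('a)"] by simp
  qed
  finally have "ennreal s * emeasure lebesgue S \<le> ennreal s * ennreal (\<omega> * (2 * K / s) + CW DIM('a) / (s / 2) * \<eta>)"
    by (rule mult_left_mono) simp
  also have "\<dots> = ennreal (s * (\<omega> * (2 * K / s) + CW DIM('a) / (s / 2) * \<eta>))"
    by (rule ennreal_mult'[symmetric]) (use s in simp)
  also have "\<dots> = ennreal (2 * \<omega> * K + 2 * CW DIM('a) * \<eta>)"
    by (rule arg_cong[where f=ennreal]) (use s in \<open>simp add: field_simps\<close>)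
  finally show ?thesis unfolding S_def K_def \<omega>_def c_def m_def n_def .
qed

theorem corollary2p6:
  fixes V :: "'a::euclidean_space measure" and \<rho> :: real
  assumes "sets V = sets borel"
    and "finite_measure V"
    and "absolutely_continuous lborel V"
    and "\<rho> > 0"
  shows "((\<lambda>t. weak_L1_norm (- ball 0 \<rho>)
            (\<lambda>x. enn2ereal (gauss_max (dilate_measure t V) x)
                 - ereal ((real DIM('a) / (2 * pi * exp 1)) powr (real DIM('a) / 2)
                          * measure V (space V) / norm x ^ DIM('a))))
          \<longlongrightarrow> 0) (at_right 0)"
proof -
  note sets = assms(1) and fm = assms(2) and rho = assms(4)
  interpret V: finite_measure V by (rule fm)
  define g where "g t = weak_L1_norm (- ball 0 \<rho>)
            (\<lambda>x. enn2ereal (gauss_max (dilate_measure t V) x)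
                 - ereal ((real DIM('a) / (2 * pi * exp 1)) powr (real DIM('a) / 2)
                          * measure V (space V) / norm x ^ DIM('a)))" for t
  define n where "n = DIM('a)"
  define c where "c = (real n / (2 * pi * exp 1)) powr (real n / 2)"
  have c: "c > 0" unfolding c_def n_def by simp
  define m where "m = measure V (space V)"
  have m: "m \<ge> 0" unfolding m_def by simp
  define \<omega> where "\<omega> = unit_ball_vol (real n)"
  have om: "\<omega> \<ge> 0" unfolding \<omega>_def by simp
  define C where "C = CW n"
  have C: "C > 0" unfolding C_def by (rule CW_pos)
  have sp: "space V = UNIV" using sets_eq_imp_space_eq[OF sets] by simp
  have main: "\<forall>\<^sub>F t in at_right 0. g t \<le> ennreal \<epsilon>" if e: "\<epsilon> > 0" for \<epsilon>
  proof -
    define \<eta> where "\<eta> = \<epsilon> / (4 * (\<omega> * c + C) + 1)"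
    have eta: "\<eta> > 0" unfolding \<eta>_def using e om c C by (intro divide_pos_pos) (auto intro: add_nonneg_pos)
    define \<epsilon>1 where "\<epsilon>1 = min (1/2) (\<epsilon> / (4 * (\<omega> * c * m) + 1))"
    have X: "\<omega> * c * m \<ge> 0" using om c m by simp
    have e1: "\<epsilon>1 > 0" "\<epsilon>1 \<le> 1" unfolding \<epsilon>1_def using e X by auto
    have bound: "2 * \<omega> * (c * (m * \<epsilon>1 + \<eta>)) + 2 * C * \<eta> \<le> \<epsilon>"
    proof -
      have b1: "2 * (\<omega> * c * m) * \<epsilon>1 \<le> \<epsilon> / 2"
      proof -
        have "\<epsilon>1 \<le> \<epsilon> / (4 * (\<omega> * c * m) + 1)" unfolding \<epsilon>1_def by simp
        hence "2 * (\<omega> * c * m) * \<epsilon>1 \<le> 2 * (\<omega> * c * m) * (\<epsilon> / (4 * (\<omega> * c * m) + 1))"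
          using X by (intro mult_left_mono) auto
        also have "\<dots> \<le> \<epsilon> / 2" using X e by (simp add: field_simps)
        finally show ?thesis .
      qed
      have b2: "2 * (\<omega> * c + C) * \<eta> \<le> \<epsilon> / 2"
      proof -
        define Y where "Y = \<omega> * c + C"
        have Y: "Y > 0" unfolding Y_def using om c C by (simp add: add_nonneg_pos)
        have "2 * Y * \<eta> = (2 * Y * \<epsilon>) / (4 * Y + 1)" unfolding \<eta>_def Y_def by simp
        also have "\<dots> \<le> \<epsilon> / 2"
        proof (subst pos_divide_le_eq)
          show "0 < 4 * Y + 1" using Y by simp
          show "2 * Y * \<epsilon> \<le> \<epsilon> / 2 * (4 * Y + 1)" using e by (simp add: algebra_simps)
        qed
        finally show ?thesis unfolding Y_def .
      qed
      have "2 * \<omega> * (c * (m * \<epsilon>1 + \<eta>)) + 2 * C * \<eta> = 2 * (\<omega> * c * m) * \<epsilon>1 + 2 * (\<omega> * c + C) * \<eta>"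
        by (simp add: algebra_simps)
      thus ?thesis using b1 b2 by linarith
    qed
    obtain R where R: "R > 0" and tail: "emeasure V (- cball 0 R) \<le> ennreal \<eta>"
    proof -
      have "(\<lambda>k. measure V (cball (0::'a) (real k))) \<longlonglongrightarrow> measure V (\<Union>k. cball (0::'a) (real k))"
      proof (rule V.finite_Lim_measure_incseq)
        show "range (\<lambda>k. cball (0::'a) (real k)) \<subseteq> sets V" by (simp only: sets) auto
        show "incseq (\<lambda>k. cball (0::'a) (real k))" by (auto simp: incseq_def)
      qed
      moreover have "(\<Union>k. cball (0::'a) (real k)) = UNIV"
      proof (intro set_eqI iffI UNIV_I)
        fix y :: 'a
        obtain k :: nat where "norm y \<le> real k" using real_arch_simple by blast
        thus "y \<in> (\<Union>k. cball (0::'a) (real k))" by auto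
      qed
      ultimately have lim: "(\<lambda>k. measure V (cball (0::'a) (real k))) \<longlonglongrightarrow> m"
        unfolding m_def sp by simp
      have "m - \<eta> < m" using eta by simp
      from order_tendstoD(1)[OF lim this] have "\<forall>\<^sub>F k in sequentially. m - \<eta> < measure V (cball (0::'a) (real k))" .
      then obtain k0 where k0: "\<And>k. k \<ge> k0 \<Longrightarrow> m - \<eta> < measure V (cball (0::'a) (real k))"
        by (auto simp: eventually_sequentially)
      define k where "k = Suc k0"
      have mk: "m - \<eta> < measure V (cball (0::'a) (real k))" using k0[of k] unfolding k_def by simp
      have "measure V (- cball (0::'a) (real k)) = m - measure V (cball (0::'a) (real k))"
      proof -
        have "measure V (space V - cball (0::'a) (real k)) = m - measure V (cball (0::'a) (real k))"
          unfolding m_def by (rule V.finite_measure_compl) (simp only: sets, simp)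
        thus ?thesis using sp by (simp add: Compl_eq_Diff_UNIV)
      qed
      hence "measure V (- cball (0::'a) (real k)) \<le> \<eta>" using mk by simp
      hence "emeasure V (- cball (0::'a) (real k)) \<le> ennreal \<eta>"
        by (simp add: V.emeasure_eq_measure ennreal_leI)
      moreover have "real k > 0" unfolding k_def by simp
      ultimately show ?thesis using that by blast
    qed
    have ev1: "\<forall>\<^sub>F t in at_right 0. (0::real) < t" by (rule eventually_at_right_less)
    have ev2: "\<forall>\<^sub>F t in at_right 0. t * R < \<rho>"
    proof -
      have "((\<lambda>t. t * R) \<longlongrightarrow> 0 * R) (at_right (0::real))" by (intro tendsto_intros)
      from order_tendstoD(2)[OF this] rho show ?thesis by simp
    qed
    have ev3: "\<forall>\<^sub>F t in at_right 0. (\<rho> / (\<rho> - t * R)) ^ DIM('a) \<le> 1 + \<epsilon>1"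
    proof -
      have "((\<lambda>t. (\<rho> / (\<rho> - t * R)) ^ DIM('a)) \<longlongrightarrow> (\<rho> / (\<rho> - 0 * R)) ^ DIM('a)) (at_right (0::real))"
        using rho by (intro tendsto_intros) auto
      hence "((\<lambda>t. (\<rho> / (\<rho> - t * R)) ^ DIM('a)) \<longlongrightarrow> 1) (at_right (0::real))" using rho by simp
      from order_tendstoD(2)[OF this, of "1 + \<epsilon>1"] e1 show ?thesis
        by (auto elim: eventually_mono)
    qed
    have ev4: "\<forall>\<^sub>F t in at_right 0. 1 - \<epsilon>1 \<le> exp (- real DIM('a) * (t * R / \<rho> + (t * R)\<^sup>2 / (2 * \<rho>\<^sup>2)))"
    proof -
      have "((\<lambda>t. exp (- real DIM('a) * (t * R / \<rho> + (t * R)\<^sup>2 / (2 * \<rho>\<^sup>2)))) \<longlongrightarrow>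
          exp (- real DIM('a) * (0 * R / \<rho> + (0 * R)\<^sup>2 / (2 * \<rho>\<^sup>2)))) (at_right (0::real))"
        using rho by (intro tendsto_intros) auto
      hence "((\<lambda>t. exp (- real DIM('a) * (t * R / \<rho> + (t * R)\<^sup>2 / (2 * \<rho>\<^sup>2)))) \<longlongrightarrow> 1) (at_right (0::real))"
        by simp
      from order_tendstoD(1)[OF this, of "1 - \<epsilon>1"] e1 show ?thesis
        by (auto elim: eventually_mono)
    qed
    show ?thesis
    proof (rule eventually_mono[OF eventually_conj[OF ev1 eventually_conj[OF ev2 eventually_conj[OF ev3 ev4]]]])
      fix t assume tt: "0 < t \<and> t * R < \<rho> \<and> (\<rho> / (\<rho> - t * R)) ^ DIM('a) \<le> 1 + \<epsilon>1 \<and>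
          1 - \<epsilon>1 \<le> exp (- real DIM('a) * (t * R / \<rho> + (t * R)\<^sup>2 / (2 * \<rho>\<^sup>2)))"
      show "g t \<le> ennreal \<epsilon>"
        unfolding g_def weak_L1_norm_def
      proof (rule SUP_least)
        fix s :: real assume "s \<in> {0<..}"
        hence s: "s > 0" by simp
        have "ennreal s * emeasure lebesgue {x \<in> - ball 0 \<rho>. ereal s < \<bar>enn2ereal (gauss_max (dilate_measure t V) x)
            - ereal ((real DIM('a) / (2 * pi * exp 1)) powr (real DIM('a) / 2) * measure V (space V) / norm x ^ DIM('a))\<bar>}
          \<le> ennreal (2 * unit_ball_vol (real DIM('a)) * ((real DIM('a) / (2 * pi * exp 1)) powr (real DIM('a) / 2) * (measure V (space V) * \<epsilon>1 + \<eta>))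
             + 2 * CW DIM('a) * \<eta>)"
          using tt by (intro main_bound[OF sets fm rho s R eta e1 tail]) auto
        also have "\<dots> \<le> ennreal \<epsilon>"
          using bound unfolding \<omega>_def c_def m_def C_def n_def by (intro ennreal_leI) simp
        finally show "ennreal s * emeasure lebesgue {x \<in> - ball 0 \<rho>. ereal s < \<bar>enn2ereal (gauss_max (dilate_measure t V) x)
            - ereal ((real DIM('a) / (2 * pi * exp 1)) powr (real DIM('a) / 2) * measure V (space V) / norm x ^ DIM('a))\<bar>}
          \<le> ennreal \<epsilon>" .
      qed
    qed
  qed
  have "(g \<longlongrightarrow> 0) (at_right 0)"
  proof (rule order_tendstoI)
    fix a :: ennreal assume "a < 0" thus "\<forall>\<^sub>F t in at_right 0. a < g t" by simp
  next
    fix a :: ennreal assume a: "0 < a"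
    obtain b :: ennreal where b: "0 < b" "b < a" using dense[OF a] by blast
    have "b \<noteq> top" using b(2) by (auto simp: top_unique)
    then obtain e where e: "b = ennreal e" "e \<ge> 0" by (cases b) auto
    have e0: "e > 0" using b(1) e by simp
    show "\<forall>\<^sub>F t in at_right 0. g t < a"
      using main[OF e0] by (rule eventually_mono) (use b e in \<open>auto intro: le_less_trans\<close>)
  qed
  thus ?thesis unfolding g_def .
qed

end
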